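(* Let $G$ and $H$ be graphs. If there is a non-trivial graph $K$ such that $K\mid G$ and $K\mid H$, then $G$ and $H$ are not weakly disjoint.
   Context: A weight function on finite $U$ is $\alpha:U\times U\to\mathbb{R}$, $\alpha\ge0$, symmetric, summing to $1$; degree $p(u)=\sum_{u'}\alpha(u,u')$; a graph is $(U,\alpha)$; it is non-trivial if at least two vertices have positive degree. For graphs $G=(U,\alpha)$, $H=(V,\beta)$ with degrees $p,q$, $H\mid G$ means there is a surjective $\phi:U\to V$ with (i) $q(v)=\sum_{u\in\phi^{-1}(v)}p(u)$ for all $v$, and (ii) $q(v)\sum_{u'\in\phi^{-1}(v')}\alpha(u,u')=p(u)\beta(v,v')$ for all $v,v'$, $u\in\phi^{-1}(v)$. A weight joining of $\alpha,\beta$ is a weight function $\gamma$ on $U\times V$ with degree $r(u,v)=\sum_{(u',v')}\gamma((u,v),(u',v'))$ such that $\sum_v r(u,v)=p(u)$, $\sum_u r(u,v)=q(v)$, $p(u)\sum_{\tilde v}\gamma((u,v),(u',\tilde v))=\alpha(u,u')r(u,v)$ and $q(v)\sum_{\tilde u}\gamma((u,v),(\tilde u,v'))=\beta(v,v')r(u,v)$. $G,H$ are weakly disjoint if every weight joining has degree $r(u,v)=p(u)q(v)$. *)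

theory Defs
  imports Complex_Main
begin

text \<open>Graphs on a finite vertex set are modelled with vertex set = UNIV of a finite type.\<close>

definition weight_fun :: "('a::finite \<Rightarrow> 'a \<Rightarrow> real) \<Rightarrow> bool" where
  "weight_fun \<alpha> \<longleftrightarrow> (\<forall>u v. 0 \<le> \<alpha> u v) \<and> (\<forall>u v. \<alpha> u v = \<alpha> v u)
     \<and> (\<Sum>u\<in>UNIV. \<Sum>v\<in>UNIV. \<alpha> u v) = 1"

definition deg :: "('a::finite \<Rightarrow> 'a \<Rightarrow> real) \<Rightarrow> 'a \<Rightarrow> real" where
  "deg \<alpha> u = (\<Sum>u'\<in>UNIV. \<alpha> u u')"

definition nontrivial_graph :: "('a::finite \<Rightarrow> 'a \<Rightarrow> real) \<Rightarrow> bool" where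
  "nontrivial_graph \<alpha> \<longleftrightarrow> (\<exists>u1 u2. u1 \<noteq> u2 \<and> 0 < deg \<alpha> u1 \<and> 0 < deg \<alpha> u2)"

text \<open>graph_divides beta alpha means H | G where H = (V, beta), G = (U, alpha).\<close>
definition graph_divides :: "('b::finite \<Rightarrow> 'b \<Rightarrow> real) \<Rightarrow> ('a::finite \<Rightarrow> 'a \<Rightarrow> real) \<Rightarrow> bool" where
  "graph_divides \<beta> \<alpha> \<longleftrightarrow> (\<exists>\<phi> :: 'a \<Rightarrow> 'b. surj \<phi>
     \<and> (\<forall>v. deg \<beta> v = (\<Sum>u\<in>\<phi> -` {v}. deg \<alpha> u))
     \<and> (\<forall>v v' u. \<phi> u = v \<longrightarrow>
          deg \<beta> v * (\<Sum>u'\<in>\<phi> -` {v'}. \<alpha> u u') = deg \<alpha> u * \<beta> v v'))"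

definition weight_joining ::
  "('a::finite \<Rightarrow> 'a \<Rightarrow> real) \<Rightarrow> ('b::finite \<Rightarrow> 'b \<Rightarrow> real)
   \<Rightarrow> ('a \<times> 'b \<Rightarrow> 'a \<times> 'b \<Rightarrow> real) \<Rightarrow> bool" where
  "weight_joining \<alpha> \<beta> \<gamma> \<longleftrightarrow> weight_fun \<gamma>
     \<and> (\<forall>u. (\<Sum>v\<in>UNIV. deg \<gamma> (u, v)) = deg \<alpha> u)
     \<and> (\<forall>v. (\<Sum>u\<in>UNIV. deg \<gamma> (u, v)) = deg \<beta> v)
     \<and> (\<forall>u v u'. deg \<alpha> u * (\<Sum>v'\<in>UNIV. \<gamma> (u, v) (u', v')) = \<alpha> u u' * deg \<gamma> (u, v))
     \<and> (\<forall>u v v'. deg \<beta> v * (\<Sum>u'\<in>UNIV. \<gamma> (u, v) (u', v')) = \<beta> v v' * deg \<gamma> (u, v))"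

definition weakly_disjoint :: "('a::finite \<Rightarrow> 'a \<Rightarrow> real) \<Rightarrow> ('b::finite \<Rightarrow> 'b \<Rightarrow> real) \<Rightarrow> bool" where
  "weakly_disjoint \<alpha> \<beta> \<longleftrightarrow> (\<forall>\<gamma>. weight_joining \<alpha> \<beta> \<gamma> \<longrightarrow>
     (\<forall>u v. deg \<gamma> (u, v) = deg \<alpha> u * deg \<beta> v))"

end

theory Submission
  imports Defs
begin

definition divs :: "('c::finite \<Rightarrow> 'c \<Rightarrow> real) \<Rightarrow> ('a::finite \<Rightarrow> 'a \<Rightarrow> real) \<Rightarrow> ('a \<Rightarrow> 'c) \<Rightarrow> bool" where
  "divs \<kappa> \<alpha> \<phi> \<longleftrightarrow> (\<forall>v. deg \<kappa> v = (\<Sum>u\<in>\<phi> -` {v}. deg \<alpha> u))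
     \<and> (\<forall>v v' u. \<phi> u = v \<longrightarrow>
          deg \<kappa> v * (\<Sum>u'\<in>\<phi> -` {v'}. \<alpha> u u') = deg \<alpha> u * \<kappa> v v')"

lemma deg_nonneg: "\<forall>u v. 0 \<le> \<alpha> u v \<Longrightarrow> 0 \<le> deg \<alpha> u"
  unfolding deg_def by (simp add: sum_nonneg)

lemma p0:
  assumes "\<forall>u v. 0 \<le> (\<alpha>::'a::finite \<Rightarrow> 'a \<Rightarrow> real) u v" "divs \<kappa> \<alpha> \<phi>" "deg \<kappa> (\<phi> u) = 0"
  shows "deg \<alpha> u = 0"
proof -
  have "(\<Sum>x\<in>\<phi> -` {\<phi> u}. deg \<alpha> x) = 0" using assms(2,3) unfolding divs_def by metis
  moreover have "\<forall>x\<in>\<phi> -` {\<phi> u}. 0 \<le> deg \<alpha> x" using deg_nonneg[OF assms(1)] by blast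
  ultimately have "\<forall>x\<in>\<phi> -` {\<phi> u}. deg \<alpha> x = 0"
    using sum_nonneg_eq_0_iff[OF finite] by blast
  then show ?thesis by simp
qed

lemma a0:
  assumes "\<forall>u v. 0 \<le> (\<alpha>::'a::finite \<Rightarrow> 'a \<Rightarrow> real) u v" "deg \<alpha> u = 0"
  shows "\<alpha> u u' = 0"
proof -
  have "(\<Sum>x\<in>UNIV. \<alpha> u x) = 0" using assms(2) unfolding deg_def .
  then show ?thesis using assms(1) by (simp add: sum_nonneg_eq_0_iff)
qed

lemma lemA:
  assumes "\<forall>u v. 0 \<le> (\<alpha>::'a::finite \<Rightarrow> 'a \<Rightarrow> real) u v" "divs \<kappa> \<alpha> \<phi>" "\<kappa> (\<phi> u) (\<phi> u') = 0"
  shows "\<alpha> u u' = 0"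
proof -
  have D2: "deg \<kappa> (\<phi> u) * (\<Sum>x\<in>\<phi> -` {\<phi> u'}. \<alpha> u x) = deg \<alpha> u * \<kappa> (\<phi> u) (\<phi> u')"
    using assms(2) unfolding divs_def by blast
  hence "deg \<kappa> (\<phi> u) = 0 \<or> (\<Sum>x\<in>\<phi> -` {\<phi> u'}. \<alpha> u x) = 0" using assms(3) by simp
  then show ?thesis
  proof
    assume "deg \<kappa> (\<phi> u) = 0"
    then show ?thesis using p0[OF assms(1,2)] a0[OF assms(1)] by blast
  next
    assume "(\<Sum>x\<in>\<phi> -` {\<phi> u'}. \<alpha> u x) = 0"
    then show ?thesis using assms(1) by (simp add: sum_nonneg_eq_0_iff)
  qed
qed

lemma S1:
  fixes \<alpha> :: "'a::finite \<Rightarrow> 'a \<Rightarrow> real" and \<beta> :: "'b::finite \<Rightarrow> 'b \<Rightarrow> real"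
    and \<kappa> :: "'c::finite \<Rightarrow> 'c \<Rightarrow> real"
  assumes na: "\<forall>u v. 0 \<le> \<alpha> u v" and nb: "\<forall>u v. 0 \<le> \<beta> u v"
    and da: "divs \<kappa> \<alpha> \<phi>" and db: "divs \<kappa> \<beta> \<psi>" and m: "\<phi> u = \<psi> v"
  shows "(\<Sum>v'\<in>UNIV. if \<phi> u' = \<psi> v' then \<alpha> u u' * \<beta> v v' / \<kappa> (\<phi> u) (\<phi> u') else 0)
     = \<alpha> u u' * deg \<beta> v / deg \<kappa> (\<phi> u)"
proof -
  have "(\<Sum>v'\<in>UNIV. if \<phi> u' = \<psi> v' then \<alpha> u u' * \<beta> v v' / \<kappa> (\<phi> u) (\<phi> u') else 0)
     = (\<Sum>v'\<in>{v'\<in>UNIV. \<psi> v' = \<phi> u'}. \<alpha> u u' * \<beta> v v' / \<kappa> (\<phi> u) (\<phi> u'))"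
    by (subst sum.inter_filter) (auto intro!: sum.cong)
  also have "\<dots> = \<alpha> u u' / \<kappa> (\<phi> u) (\<phi> u') * (\<Sum>v'\<in>\<psi> -` {\<phi> u'}. \<beta> v v')"
    by (simp add: sum_distrib_left vimage_def)
  also have "\<dots> = \<alpha> u u' * deg \<beta> v / deg \<kappa> (\<phi> u)"
  proof (cases "\<alpha> u u' = 0")
    case True then show ?thesis by simp
  next
    case False
    have k: "\<kappa> (\<phi> u) (\<phi> u') \<noteq> 0" using lemA[OF na da] False by blast
    have q: "deg \<kappa> (\<phi> u) \<noteq> 0" using p0[OF na da] a0[OF na] False by blast
    have "deg \<kappa> (\<psi> v) * (\<Sum>v'\<in>\<psi> -` {\<phi> u'}. \<beta> v v') = deg \<beta> v * \<kappa> (\<psi> v) (\<phi> u')"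
      using db unfolding divs_def by blast
    then have "(\<Sum>v'\<in>\<psi> -` {\<phi> u'}. \<beta> v v') = deg \<beta> v * \<kappa> (\<phi> u) (\<phi> u') / deg \<kappa> (\<phi> u)"
      using q m by (simp add: field_simps)
    then show ?thesis using k q by (simp add: field_simps)
  qed
  finally show ?thesis .
qed

lemma marg:
  fixes \<alpha> :: "'a::finite \<Rightarrow> 'a \<Rightarrow> real" and \<beta> :: "'b::finite \<Rightarrow> 'b \<Rightarrow> real"
    and \<kappa> :: "'c::finite \<Rightarrow> 'c \<Rightarrow> real"
  assumes na: "\<forall>u v. 0 \<le> \<alpha> u v" and da: "divs \<kappa> \<alpha> \<phi>" and db: "divs \<kappa> \<beta> \<psi>"
  shows "(\<Sum>v\<in>UNIV. if \<phi> u = \<psi> v then deg \<alpha> u * deg \<beta> v / deg \<kappa> (\<phi> u) else 0) = deg \<alpha> u"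
proof -
  have "(\<Sum>v\<in>UNIV. if \<phi> u = \<psi> v then deg \<alpha> u * deg \<beta> v / deg \<kappa> (\<phi> u) else 0)
     = (\<Sum>v\<in>{v\<in>UNIV. \<psi> v = \<phi> u}. deg \<alpha> u * deg \<beta> v / deg \<kappa> (\<phi> u))"
    by (subst sum.inter_filter) (auto intro!: sum.cong)
  also have "\<dots> = deg \<alpha> u / deg \<kappa> (\<phi> u) * (\<Sum>v\<in>\<psi> -` {\<phi> u}. deg \<beta> v)"
    by (simp add: sum_distrib_left vimage_def)
  also have "\<dots> = deg \<alpha> u / deg \<kappa> (\<phi> u) * deg \<kappa> (\<phi> u)"
    using db unfolding divs_def by metis
  also have "\<dots> = deg \<alpha> u" using p0[OF na da, of u] by auto
  finally show ?thesis .
qed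

lemma sum_pair: "(\<Sum>x\<in>(UNIV::('a::finite\<times>'b::finite) set). f x) = (\<Sum>u\<in>UNIV. \<Sum>v\<in>UNIV. (f (u,v)::real))"
  by (subst UNIV_Times_UNIV[symmetric]) (simp only: sum.cartesian_product case_prod_eta)

lemma ex_nz:
  assumes "(\<Sum>u\<in>A. f u) \<noteq> (0::real)" shows "\<exists>u\<in>A. f u \<noteq> 0"
  using assms sum.neutral by metis

theorem proposition4p7:
  fixes \<alpha> :: "'a::finite \<Rightarrow> 'a \<Rightarrow> real"
    and \<beta> :: "'b::finite \<Rightarrow> 'b \<Rightarrow> real"
    and \<kappa> :: "'c::finite \<Rightarrow> 'c \<Rightarrow> real"
  assumes "weight_fun \<alpha>" and "weight_fun \<beta>" and "weight_fun \<kappa>"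
    and "nontrivial_graph \<kappa>"
    and "graph_divides \<kappa> \<alpha>" and "graph_divides \<kappa> \<beta>"
  shows "\<not> weakly_disjoint \<alpha> \<beta>"
proof
  assume wd: "weakly_disjoint \<alpha> \<beta>"
  obtain \<phi> where da: "divs \<kappa> \<alpha> \<phi>" using assms(5) unfolding graph_divides_def divs_def by blast
  obtain \<psi> where db: "divs \<kappa> \<beta> \<psi>" using assms(6) unfolding graph_divides_def divs_def by blast
  have na: "\<forall>u v. 0 \<le> \<alpha> u v" and sa: "\<forall>u v. \<alpha> u v = \<alpha> v u" and ta: "(\<Sum>u\<in>UNIV. \<Sum>v\<in>UNIV. \<alpha> u v) = 1"
    using assms(1) unfolding weight_fun_def by auto
  have nb: "\<forall>u v. 0 \<le> \<beta> u v" and sb: "\<forall>u v. \<beta> u v = \<beta> v u"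
    using assms(2) unfolding weight_fun_def by auto
  have nk: "\<forall>u v. 0 \<le> \<kappa> u v" and sk: "\<forall>u v. \<kappa> u v = \<kappa> v u"
    using assms(3) unfolding weight_fun_def by auto
  define \<gamma> where "\<gamma> = (\<lambda>x y. if \<phi> (fst x) = \<psi> (snd x) \<and> \<phi> (fst y) = \<psi> (snd y)
      then \<alpha> (fst x) (fst y) * \<beta> (snd x) (snd y) / \<kappa> (\<phi> (fst x)) (\<phi> (fst y)) else 0)"
  have g: "\<gamma> (u,v) (u',v') = (if \<phi> u = \<psi> v \<and> \<phi> u' = \<psi> v'
      then \<alpha> u u' * \<beta> v v' / \<kappa> (\<phi> u) (\<phi> u') else 0)" for u v u' v'
    unfolding \<gamma>_def by simp
  have S1g: "(\<Sum>v'\<in>UNIV. \<gamma> (u,v) (u',v')) = (if \<phi> u = \<psi> v then \<alpha> u u' * deg \<beta> v / deg \<kappa> (\<phi> u) else 0)"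
    for u v u'
  proof (cases "\<phi> u = \<psi> v")
    case True
    then show ?thesis unfolding g using S1[OF na nb da db True, of u'] by simp
  next
    case False then show ?thesis unfolding g by simp
  qed
  have S2g: "(\<Sum>u'\<in>UNIV. \<gamma> (u,v) (u',v')) = (if \<phi> u = \<psi> v then \<beta> v v' * deg \<alpha> u / deg \<kappa> (\<psi> v) else 0)"
    for u v v'
  proof (cases "\<phi> u = \<psi> v")
    case True
    have "(\<Sum>u'\<in>UNIV. \<gamma> (u,v) (u',v')) =
      (\<Sum>u'\<in>UNIV. if \<psi> v' = \<phi> u' then \<beta> v v' * \<alpha> u u' / \<kappa> (\<psi> v) (\<psi> v') else 0)"
      unfolding g using True by (auto intro!: sum.cong)
    also have "\<dots> = \<beta> v v' * deg \<alpha> u / deg \<kappa> (\<psi> v)"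
      using S1[OF nb na db da True[symmetric], of v'] .
    finally show ?thesis using True by simp
  next
    case False then show ?thesis unfolding g by simp
  qed
  have dg_split: "deg \<gamma> (u,v) = (\<Sum>u'\<in>UNIV. \<Sum>v'\<in>UNIV. \<gamma> (u,v) (u',v'))" for u v
    unfolding deg_def by (rule sum_pair)
  have r: "deg \<gamma> (u,v) = (if \<phi> u = \<psi> v then deg \<alpha> u * deg \<beta> v / deg \<kappa> (\<phi> u) else 0)" for u v
  proof (cases "\<phi> u = \<psi> v")
    case True
    have "deg \<gamma> (u,v) = (\<Sum>u'\<in>UNIV. \<alpha> u u' * deg \<beta> v / deg \<kappa> (\<phi> u))"
      unfolding dg_split S1g using True by simp
    also have "\<dots> = (\<Sum>u'\<in>UNIV. \<alpha> u u') * deg \<beta> v / deg \<kappa> (\<phi> u)"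
      by (simp only: sum_divide_distrib[symmetric] sum_distrib_right[symmetric])
    finally show ?thesis using True unfolding deg_def by simp
  next
    case False
    then show ?thesis unfolding dg_split S1g by simp
  qed
  have m1: "(\<Sum>v\<in>UNIV. deg \<gamma> (u, v)) = deg \<alpha> u" for u
    unfolding r using marg[OF na da db] .
  have m2: "(\<Sum>u\<in>UNIV. deg \<gamma> (u, v)) = deg \<beta> v" for v
  proof -
    have "(\<Sum>u\<in>UNIV. deg \<gamma> (u, v)) = (\<Sum>u\<in>UNIV. if \<psi> v = \<phi> u then deg \<beta> v * deg \<alpha> u / deg \<kappa> (\<psi> v) else 0)"
      unfolding r by (auto intro!: sum.cong)
    also have "\<dots> = deg \<beta> v" using marg[OF nb db da] .
    finally show ?thesis .
  qed
  have wg: "weight_fun \<gamma>"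
    unfolding weight_fun_def
  proof (intro conjI allI)
    fix x y show "0 \<le> \<gamma> x y" unfolding \<gamma>_def using na nb nk by simp
  next
    fix x y show "\<gamma> x y = \<gamma> y x" unfolding \<gamma>_def using sa sb sk by auto
  next
    have "(\<Sum>x\<in>UNIV. \<Sum>y\<in>UNIV. \<gamma> x y) = (\<Sum>x\<in>UNIV. deg \<gamma> x)" unfolding deg_def ..
    also have "\<dots> = (\<Sum>u\<in>UNIV. \<Sum>v\<in>UNIV. deg \<gamma> (u,v))"
      by (rule sum_pair)
    also have "\<dots> = (\<Sum>u\<in>UNIV. deg \<alpha> u)" using m1 by simp
    also have "\<dots> = 1" using ta unfolding deg_def .
    finally show "(\<Sum>x\<in>UNIV. \<Sum>y\<in>UNIV. \<gamma> x y) = 1" .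
  qed
  have wj: "weight_joining \<alpha> \<beta> \<gamma>"
    unfolding weight_joining_def
  proof (intro conjI allI)
    show "weight_fun \<gamma>" by (rule wg)
  next
    fix u show "(\<Sum>v\<in>UNIV. deg \<gamma> (u, v)) = deg \<alpha> u" by (rule m1)
  next
    fix v show "(\<Sum>u\<in>UNIV. deg \<gamma> (u, v)) = deg \<beta> v" by (rule m2)
  next
    fix u v u'
    show "deg \<alpha> u * (\<Sum>v'\<in>UNIV. \<gamma> (u, v) (u', v')) = \<alpha> u u' * deg \<gamma> (u, v)"
      unfolding S1g r by simp
  next
    fix u v v'
    show "deg \<beta> v * (\<Sum>u'\<in>UNIV. \<gamma> (u, v) (u', v')) = \<beta> v v' * deg \<gamma> (u, v)"
      unfolding S2g r by auto
  qed
  obtain w1 w2 where w: "w1 \<noteq> w2" "0 < deg \<kappa> w1" "0 < deg \<kappa> w2"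
    using assms(4) unfolding nontrivial_graph_def by blast
  have "(\<Sum>u\<in>\<phi> -` {w1}. deg \<alpha> u) \<noteq> 0" using w(2) da unfolding divs_def by (metis less_irrefl)
  then obtain u where u: "\<phi> u = w1" "deg \<alpha> u \<noteq> 0" using ex_nz by blast
  have "(\<Sum>v\<in>\<psi> -` {w2}. deg \<beta> v) \<noteq> 0" using w(3) db unfolding divs_def by (metis less_irrefl)
  then obtain v where v: "\<psi> v = w2" "deg \<beta> v \<noteq> 0" using ex_nz by blast
  have "deg \<gamma> (u,v) = deg \<alpha> u * deg \<beta> v" using wd wj unfolding weakly_disjoint_def by blast
  moreover have "deg \<gamma> (u,v) = 0" unfolding r using u v w by simp
  ultimately show False using u v by simp
qed

end
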